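(* With $\alpha=(1+\sqrt5)/2$, $$\sum_{k=1}^\infty\frac{1}{5^k(2k-1)(2k)(2k+1)}=\frac12\ln\frac45+\frac{3}{\sqrt5}\ln\alpha-\frac12,$$ $$\sum_{k=1}^\infty\frac{4^k}{5^k(2k-1)(2k)(2k+1)}=-\frac12\ln 5+\frac{27}{4\sqrt5}\ln\alpha-\frac12,$$ $$\sum_{k=1}^\infty\frac{5^k}{9^k(2k-1)(2k)(2k+1)}=\ln\frac23+\frac{14}{3\sqrt5}\ln\alpha-\frac12.$$ *)

theory Defs
  imports "HOL-Analysis.Analysis"
begin

end

theory Submission imports Defs begin
lemma gen:
  fixes y::real assumes y: "0<y" "y<1"
  shows "(\<lambda>n. let k = Suc n in (y^2)^k / ((2*real k - 1)*(2*real k)*(2*real k+1))) sums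
     ((y+1/y)/2 * (ln((1+y)/(1-y))/2) + 1/2*ln(1-y^2) - 1/2)"
proof -
  define A where "A = ln((1+y)/(1-y))/2"
  have x: "(1+y)/(1-y) > 0" using y by simp
  have e: "((1+y)/(1-y) - 1) / ((1+y)/(1-y) + 1) = y" using y by (simp add: field_simps)
  have "(\<lambda>n. 2*y^(2*n+1)/of_nat (2*n+1)) sums ln ((1+y)/(1-y))"
    using ln_series_quadratic[OF x] unfolding e .
  from sums_mult[OF this, of "1/2"]
  have g: "(\<lambda>n. y^(2*n+1)/real (2*n+1)) sums A" by (simp add: A_def)
  have "\<bar>-(y^2)\<bar> < 1" using y by (simp add: power_less_one_iff abs_square_less_1)
  from ln_series'[OF this] have "(\<lambda>n. - ((y^2)^n) / real n) sums ln (1 - y^2)" by simp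
  hence "(\<lambda>n. - ((y^2)^Suc n) / real (Suc n)) sums ln (1 - y^2)"
    by (subst sums_Suc_iff) simp
  from sums_mult[OF this, of "-1/2"]
  have h: "(\<lambda>n. (1/2) * ((y^2)^Suc n / real (Suc n))) sums (-1/2 * ln (1 - y^2))" by simp
  have g1: "(\<lambda>n. y^(2*Suc n+1)/real (2*Suc n+1)) sums (A - y)"
    using g by (subst sums_Suc_iff) simp
  have S: "(\<lambda>n. y/2 * (y^(2*n+1)/real (2*n+1)) - (1/2) * ((y^2)^Suc n / real (Suc n))
      + 1/(2*y) * (y^(2*Suc n+1)/real (2*Suc n+1))) sums
      (y/2 * A - (-1/2 * ln (1 - y^2)) + 1/(2*y) * (A - y))"
    by (intro sums_add sums_diff sums_mult g h g1)
  have eq: "(let k = Suc n in (y^2)^k / ((2*real k - 1)*(2*real k)*(2*real k+1))) =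
     y/2 * (y^(2*n+1)/real (2*n+1)) - (1/2) * ((y^2)^Suc n / real (Suc n))
      + 1/(2*y) * (y^(2*Suc n+1)/real (2*Suc n+1))" for n
  proof -
    define p where "p = (y^2)^n"
    have p1: "y^(2*n+1) = y*p" "y^(2*Suc n+1) = y^3*p" "(y^2)^Suc n = y^2*p"
      apply (simp_all add: p_def power_mult[symmetric] power_add[symmetric] ac_simps)
        by (simp add: power_add numeral_3_eq_3)
    define m where "m = real n"
    have m: "m \<ge> 0" by (simp add: m_def)
    have r: "real (2*n+1) = 2*m+1" "real (2*Suc n+1) = 2*m+3" "real (Suc n) = m+1"
      "real (Suc n) = m+1" by (simp_all add: m_def)
    have d: "2*m+1 > 0" "2*m+3>0" "m+1>0" "2*(m+1)-1>0" using m by auto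
    have "y^2*p/((2*(m+1)-1)*(2*(m+1))*(2*(m+1)+1)) = y/2*(y*p/(2*m+1)) - 1/2*(y^2*p/(m+1)) + 1/(2*y)*(y^3*p/(2*m+3))"
    proof -
      have a: "2*(m+1)-1 = 2*m+1" "2*(m+1)+1 = 2*m+3" by simp_all
      show ?thesis unfolding a using y d
        by (simp add: divide_simps) (simp add: algebra_simps power2_eq_square power3_eq_cube)
    qed
    then show ?thesis unfolding Let_def p1 r .
  qed
  have v: "y/2 * A - (-1/2 * ln (1 - y^2)) + 1/(2*y) * (A - y) =
     (y+1/y)/2 * (ln((1+y)/(1-y))/2) + 1/2*ln(1-y^2) - 1/2"
    using y by (simp add: A_def field_simps)
  show ?thesis using S unfolding eq[symmetric] v .
qed

lemma fn_eq: "(\<lambda>n. let k = Suc n in a ^ k / (b ^ k * (2 * real k - 1) * (2 * real k) * (2 * real k + 1)))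
   = (\<lambda>n. let k = Suc n in (a/b)^k / ((2*real k - 1)*(2*real k)*(2*real k+1)))" for a b :: real
  by (simp add: Let_def power_divide mult.assoc)

theorem corollary5:
  defines "\<alpha> \<equiv> (1 + sqrt 5) / 2"
  shows "((\<lambda>n. let k = Suc n in 1 / (5 ^ k * (2 * real k - 1) * (2 * real k) * (2 * real k + 1)))
           sums (1/2 * ln (4/5) + 3 / sqrt 5 * ln \<alpha> - 1/2)) \<and>
         ((\<lambda>n. let k = Suc n in 4 ^ k / (5 ^ k * (2 * real k - 1) * (2 * real k) * (2 * real k + 1)))
           sums (- 1/2 * ln 5 + 27 / (4 * sqrt 5) * ln \<alpha> - 1/2)) \<and>
         ((\<lambda>n. let k = Suc n in 5 ^ k / (9 ^ k * (2 * real k - 1) * (2 * real k) * (2 * real k + 1)))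
           sums (ln (2/3) + 14 / (3 * sqrt 5) * ln \<alpha> - 1/2))"
proof -
  have s5: "sqrt 5 > 2" by (rule real_less_rsqrt) simp
  have s5': "sqrt 5 < 3" by (rule real_less_lsqrt) simp_all
  have sq: "sqrt 5 ^ 2 = 5" by simp
  have ne: "2 * sqrt 5 \<noteq> 5"
  proof
    assume "2 * sqrt 5 = 5"
    then have "(2 * sqrt 5)^2 = 25" by simp
    moreover have "(2 * sqrt 5)^2 = 20" by (simp add: power_mult_distrib)
    ultimately show False by simp
  qed
  have ap: "\<alpha> > 0" using s5 by (simp add: \<alpha>_def)
  have a2: "\<alpha>^2 = (3 + sqrt 5)/2" unfolding \<alpha>_def by (simp add: power2_eq_square field_simps, (simp add: algebra_simps)?)
  have a3: "\<alpha>^3 = 2 + sqrt 5" unfolding \<alpha>_def by (simp add: power3_eq_cube field_simps, (simp add: algebra_simps)?)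
  have a4: "\<alpha>^4 = (7 + 3 * sqrt 5)/2"
  proof -
    have "\<alpha>^4 = (\<alpha>^2)^2" by simp
    also have "... = (7 + 3 * sqrt 5)/2" unfolding a2 by (simp add: power2_eq_square field_simps, (simp add: algebra_simps)?)
    finally show ?thesis .
  qed
  have a6: "\<alpha>^6 = 9 + 4 * sqrt 5"
  proof -
    have "\<alpha>^6 = (\<alpha>^3)^2" by simp
    also have "... = 9 + 4 * sqrt 5" unfolding a3 by (simp add: power2_eq_square field_simps, (simp add: algebra_simps)?)
    finally show ?thesis .
  qed
  have 1: "(\<lambda>n. let k = Suc n in 1 / (5 ^ k * (2 * real k - 1) * (2 * real k) * (2 * real k + 1)))
           sums (1/2 * ln (4/5) + 3 / sqrt 5 * ln \<alpha> - 1/2)"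
  proof -
    define y where "y = 1 / sqrt 5"
    have y: "0 < y" "y < 1" using s5 by (auto simp: y_def)
    have y2: "y^2 = 1/5" by (simp add: y_def power_divide)
    have r: "(1+y)/(1-y) = \<alpha>^2" using s5 s5' unfolding a2 y_def by (simp add: field_simps, (simp add: divide_eq_eq algebra_simps)?)
    have v: "(y+1/y)/2 * (ln((1+y)/(1-y))/2) + 1/2*ln(1-y^2) - 1/2 = 1/2 * ln (4/5) + 3 / sqrt 5 * ln \<alpha> - 1/2"
      unfolding r y2 using s5 ap by (simp add: ln_realpow y_def field_simps)
    show ?thesis using gen[OF y, unfolded v, unfolded y2] by (subst (asm) fn_eq[of 1 5, symmetric]) simp
  qed
  have 2: "(\<lambda>n. let k = Suc n in 4 ^ k / (5 ^ k * (2 * real k - 1) * (2 * real k) * (2 * real k + 1)))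
           sums (- 1/2 * ln 5 + 27 / (4 * sqrt 5) * ln \<alpha> - 1/2)"
  proof -
    define y where "y = 2 / sqrt 5"
    have y: "0 < y" "y < 1" using s5 by (auto simp: y_def)
    have y2: "y^2 = 4/5" by (simp add: y_def power_divide)
    have r: "(1+y)/(1-y) = \<alpha>^6" using s5 s5' ne unfolding a6 y_def by (simp add: field_simps, (simp add: divide_eq_eq algebra_simps)?)
    have v: "(y+1/y)/2 * (ln((1+y)/(1-y))/2) + 1/2*ln(1-y^2) - 1/2 = - 1/2 * ln 5 + 27 / (4 * sqrt 5) * ln \<alpha> - 1/2"
      unfolding r y2 using s5 ap by (simp add: ln_realpow y_def field_simps ln_div)
    show ?thesis using gen[OF y, unfolded v, unfolded y2] by (subst (asm) fn_eq[of 4 5, symmetric]) simp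
  qed
  have 3: "(\<lambda>n. let k = Suc n in 5 ^ k / (9 ^ k * (2 * real k - 1) * (2 * real k) * (2 * real k + 1)))
           sums (ln (2/3) + 14 / (3 * sqrt 5) * ln \<alpha> - 1/2)"
  proof -
    define y where "y = sqrt 5 / 3"
    have y: "0 < y" "y < 1" using s5' by (auto simp: y_def)
    have y2: "y^2 = 5/9" by (simp add: y_def power_divide)
    have r: "(1+y)/(1-y) = \<alpha>^4" using s5 s5' unfolding a4 y_def by (simp add: field_simps, (simp add: divide_eq_eq algebra_simps)?)
    have l: "ln (4/9::real) = 2 * ln (2/3)" using ln_realpow[of "2/3::real" 2] by (simp add: power_divide)
    have v: "(y+1/y)/2 * (ln((1+y)/(1-y))/2) + 1/2*ln(1-y^2) - 1/2 = ln (2/3) + 14 / (3 * sqrt 5) * ln \<alpha> - 1/2"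
      unfolding r y2 using s5 ap by (simp add: ln_realpow y_def field_simps l)
    show ?thesis using gen[OF y, unfolded v, unfolded y2] by (subst (asm) fn_eq[of 5 9, symmetric]) simp
  qed
  show ?thesis using 1 2 3 by blast
qed

end
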